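(* For $n$ a power of 2, for all but an $o(1)$ fraction (as $n\to\infty$) of the sets $A\subseteq\{0,1\}^{\log n}$ with $|A|=n/2$, every classical probabilistic property tester for $P_A=\{x\in\{0,1\}^n:\exists y\in A,\ x=h(y)\}$ with distance parameter $1/3$ (even allowing two-sided error) makes $\Omega(\log n)$ queries.
   Context: Logarithms are base 2. Positions $i\in\{1,\dots,n\}$ are identified with vectors in $\mathbb{F}_2^{\log n}$; the Hadamard code of $y\in\{0,1\}^{\log n}$ is $h(y)\in\{0,1\}^n$ with $h(y)_i=y\cdot i$ over $\mathbb{F}_2$. For $P\subseteq\{0,1\}^n$, $x$ is $\epsilon$-far from $P$ if it differs from every element of $P$ in more than $\epsilon n$ positions. A classical property tester for $P$ with distance parameter $\epsilon$ is a probabilistic (possibly adaptive) algorithm with query access to the bits of $x$ that accepts every $x\in P$ with probability at least $2/3$ and every $x$ that is $\epsilon$-far from $P$ with probability at most $1/3$; its complexity is the number of queries. *)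

theory Defs
  imports "HOL-Probability.Probability"
begin

text \<open>Positions i in {0..<2^k} (n = 2^k, k = log n) are identified with vectors in F_2^k
  via their binary representation; likewise y in {0,1}^k is a natural number y < 2^k.\<close>

definition f2_dot :: "nat \<Rightarrow> nat \<Rightarrow> nat \<Rightarrow> bool" where
  "f2_dot k y i = odd (card {j. j < k \<and> bit y j \<and> bit i j})"

definition hadamard :: "nat \<Rightarrow> nat \<Rightarrow> bool list" where
  "hadamard k y = map (\<lambda>i. f2_dot k y i) [0..<2^k]"

definition P_A :: "nat \<Rightarrow> nat set \<Rightarrow> bool list set" where
  "P_A k A = {x. \<exists>y\<in>A. x = hadamard k y}"

definition hdist :: "bool list \<Rightarrow> bool list \<Rightarrow> nat" where
  "hdist x z = card {i. i < length x \<and> x ! i \<noteq> z ! i}"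

definition far :: "nat \<Rightarrow> bool list set \<Rightarrow> real \<Rightarrow> bool list \<Rightarrow> bool" where
  "far n P eps x = (\<forall>z\<in>P. real (hdist x z) > eps * real n)"

text \<open>Deterministic adaptive query algorithms = decision trees. A query of position i
  returns bit i of the input (out-of-range queries return False).\<close>
datatype dtree = Leaf bool | Query nat dtree dtree

fun eval_tree :: "dtree \<Rightarrow> bool list \<Rightarrow> bool" where
  "eval_tree (Leaf b) x = b"
| "eval_tree (Query i t1 t0) x =
     (if i < length x \<and> x ! i then eval_tree t1 x else eval_tree t0 x)"

fun depth :: "dtree \<Rightarrow> nat" where
  "depth (Leaf b) = 0"
| "depth (Query i t1 t0) = Suc (max (depth t1) (depth t0))"

text \<open>A probabilistic (adaptive) algorithm = probability distribution over decision trees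
  (randomness fixed in advance). Its query complexity is the maximal depth in its support.\<close>
definition accept_prob :: "dtree pmf \<Rightarrow> bool list \<Rightarrow> real" where
  "accept_prob T x = measure_pmf.prob T {t. eval_tree t x}"

definition is_tester :: "nat \<Rightarrow> bool list set \<Rightarrow> real \<Rightarrow> dtree pmf \<Rightarrow> bool" where
  "is_tester n P eps T =
     ((\<forall>x\<in>P. accept_prob T x \<ge> 2/3) \<and>
      (\<forall>x. length x = n \<and> far n P eps x \<longrightarrow> accept_prob T x \<le> 1/3))"

definition makes_at_most :: "dtree pmf \<Rightarrow> nat \<Rightarrow> bool" where
  "makes_at_most T q = (\<forall>t\<in>set_pmf T. depth t \<le> q)"

end

theory Submission
  imports Defs "HOL-Real_Asymp.Real_Asymp"
begin


lemma bit_lt_pow: "(i::nat) < 2^k \<Longrightarrow> bit i j \<Longrightarrow> j < k"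
  by (metis bit_take_bit_iff take_bit_nat_eq_self_iff)

lemma flip_lt: "j < k \<Longrightarrow> (i::nat) < 2^k \<Longrightarrow> flip_bit j i < 2^k"
  by (metis take_bit_flip_bit_eq take_bit_nat_eq_self_iff not_le take_bit_nat_less_exp)

lemma flip_flip: "flip_bit j (flip_bit j (i::nat)) = i"
  by (rule bit_eqI) (auto simp: bit_flip_bit_iff)

lemma f2_dot_flip:
  assumes "j < k"
  shows "f2_dot k y (flip_bit j i) = (f2_dot k y i \<noteq> bit y j)"
proof -
  define S where "S = {j'. j' < k \<and> bit y j' \<and> bit i j'}"
  define S' where "S' = {j'. j' < k \<and> bit y j' \<and> bit (flip_bit j i) j'}"
  have fin: "finite S" "finite S'" unfolding S_def S'_def by auto
  have "odd (card S') = (odd (card S) \<noteq> bit y j)"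
  proof (cases "bit y j")
    case False
    then have "S' = S" unfolding S_def S'_def by (auto simp: bit_flip_bit_iff)
    then show ?thesis using False by simp
  next
    case True
    show ?thesis
    proof (cases "bit i j")
      case True2: True
      have "S = insert j S'" "j \<notin> S'" unfolding S_def S'_def using True True2 assms
        by (auto simp: bit_flip_bit_iff)
      then show ?thesis using fin True by simp
    next
      case False2: False
      have "S' = insert j S" "j \<notin> S" unfolding S_def S'_def using True False2 assms
        by (auto simp: bit_flip_bit_iff)
      then show ?thesis using fin True by simp
    qed
  qed
  then show ?thesis unfolding f2_dot_def S_def S'_def by simp
qed

lemma hadamard_dist:
  assumes "y < 2^k" "y' < 2^k" "y \<noteq> y'"
  shows "2 * hdist (hadamard k y) (hadamard k y') = 2^k"
proof -
  obtain j where j: "bit y j \<noteq> bit y' j" using assms(3) bit_eq_iff by blast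
  have jk: "j < k" using j assms(1,2) bit_lt_pow by blast
  define D where "D = {i. i < 2^k \<and> f2_dot k y i \<noteq> f2_dot k y' i}"
  define E where "E = {i. i < (2::nat)^k \<and> f2_dot k y i = f2_dot k y' i}"
  have hd: "hdist (hadamard k y) (hadamard k y') = card D"
    unfolding hdist_def hadamard_def D_def by (rule arg_cong[where f=card]) auto
  have fl: "\<And>i. f2_dot k y (flip_bit j i) \<noteq> f2_dot k y' (flip_bit j i) \<longleftrightarrow> f2_dot k y i = f2_dot k y' i"
    using f2_dot_flip[OF jk] j by auto
  have inj: "inj (flip_bit j :: nat \<Rightarrow> nat)" by (metis flip_flip injI)
  have "flip_bit j ` D \<subseteq> E" unfolding D_def E_def using fl flip_lt[OF jk] by auto
  then have c1: "card D \<le> card E"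
    by (metis card_image card_mono finite_Collect_conjI finite_Collect_less_nat inj inj_on_subset subset_UNIV E_def)
  have "flip_bit j ` E \<subseteq> D" unfolding D_def E_def using fl flip_lt[OF jk] by auto
  then have c2: "card E \<le> card D"
    by (metis card_image card_mono finite_Collect_conjI finite_Collect_less_nat inj inj_on_subset subset_UNIV D_def)
  have "D \<union> E = {..<2^k}" "D \<inter> E = {}" unfolding D_def E_def by auto
  then have "card D + card E = 2^k"
    by (metis card_Un_disjoint card_lessThan finite_Un finite_lessThan)
  then show ?thesis using hd c1 c2 by linarith
qed



fun normt :: "nat \<Rightarrow> dtree \<Rightarrow> dtree" where
  "normt n (Leaf b) = Leaf b"
| "normt n (Query i a b) = Query (min i n) (normt n a) (normt n b)"

lemma eval_normt: "length x = n \<Longrightarrow> eval_tree (normt n t) x = eval_tree t x"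
  by (induction t) (auto simp: min_def)

fun dtrees :: "nat \<Rightarrow> nat \<Rightarrow> dtree set" where
  "dtrees n 0 = {Leaf True, Leaf False}"
| "dtrees n (Suc q) = {Leaf True, Leaf False} \<union>
     (\<lambda>(i,a,b). Query i a b) ` ({..n} \<times> dtrees n q \<times> dtrees n q)"

lemma normt_in: "depth t \<le> q \<Longrightarrow> normt n t \<in> dtrees n q"
proof (induction t arbitrary: q)
  case (Leaf b)
  then show ?case by (cases q) (cases b; auto)+
next
  case (Query i a b)
  then obtain q' where q: "q = Suc q'" by (cases q) auto
  with Query show ?case by (auto simp: image_iff)
qed

lemma trees_card: "finite (dtrees n q) \<and> (n+3) * card (dtrees n q) \<le> (n+3) ^ (2^(q+1))"
proof (induction q)
  case 0
  have "(n+3) * 2 \<le> (n+3)^2" unfolding power2_eq_square by (intro mult_le_mono2) simp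
  then show ?case by simp
next
  case (Suc q)
  let ?X = "card (dtrees n q)"
  have fin: "finite (dtrees n q)" using Suc by simp
  have "Leaf True \<in> dtrees n q" by (cases q) auto
  then have X1: "?X \<ge> 1" using fin by (metis One_nat_def Suc_leI card_gt_0_iff empty_iff)
  have f2: "finite (dtrees n (Suc q))" using fin by simp
  have "card (dtrees n (Suc q)) \<le> card {Leaf True, Leaf False} +
      card ((\<lambda>(i,a,b). Query i a b) ` ({..n} \<times> dtrees n q \<times> dtrees n q))"
    unfolding dtrees.simps by (rule card_Un_le)
  also have "\<dots> \<le> 2 + card ({..n} \<times> dtrees n q \<times> dtrees n q)"
  proof (rule add_mono)
    show "card {Leaf True, Leaf False} \<le> 2" by (simp add: card_insert_if)
    show "card ((\<lambda>(i,a,b). Query i a b) ` ({..n} \<times> dtrees n q \<times> dtrees n q)) \<le> card ({..n} \<times> dtrees n q \<times> dtrees n q)"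
      by (rule card_image_le) (use fin in simp)
  qed
  also have "\<dots> = 2 + (n+1) * ?X * ?X" by (simp add: card_cartesian_product algebra_simps)
  also have "\<dots> \<le> (n+3) * ?X * ?X"
  proof -
    have "1 \<le> ?X * ?X" using mult_le_mono[OF X1 X1] by simp
    moreover have "(n+3)*?X*?X = (n+1)*?X*?X + 2*(?X*?X)" by (simp add: algebra_simps)
    ultimately show ?thesis by linarith
  qed
  finally have N: "card (dtrees n (Suc q)) \<le> (n+3) * ?X * ?X" .
  have "(n+3) * card (dtrees n (Suc q)) \<le> (n+3) * ((n+3) * ?X * ?X)"
    using N by (rule mult_le_mono2)
  also have "\<dots> = ((n+3) * ?X)^2" by (simp add: power2_eq_square algebra_simps)
  also have "\<dots> \<le> ((n+3) ^ (2^(q+1)))^2" using Suc by (intro power_mono) simp_all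
  also have "\<dots> = (n+3) ^ (2^(q+1)*2)" by (rule power_mult[symmetric])
  also have "2^(q+1)*2 = (2::nat)^(Suc q+1)" by simp
  finally show ?case using f2 by simp
qed



lemma Ds_card:
  "real (card {D. D \<subseteq> {..<(n::nat)} \<and> 3 * card D \<le> n}) \<le> (3/2)^n * 2 powr (real n / 3)"
proof -
  let ?Ds = "{D. D \<subseteq> {..<(n::nat)} \<and> 3 * card D \<le> n}"
  have fin: "finite ?Ds" by (rule finite_subset[of _ "Pow {..<n}"]) auto
  have "(\<Prod>x\<in>{..<n}. (1/2::real) + 1) = (\<Sum>X\<in>Pow {..<n}. (\<Prod>x\<in>X. 1/2) * (\<Prod>x\<in>{..<n}-X. 1))"
    by (rule prod_add) simp
  then have tot: "(\<Sum>X\<in>Pow {..<n}. (1/2::real)^card X) = (3/2)^n" by simp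
  have "(\<Sum>X\<in>?Ds. (1/2::real)^card X) \<le> (\<Sum>X\<in>Pow {..<n}. (1/2::real)^card X)"
    by (rule sum_mono2) auto
  moreover have "(\<Sum>X\<in>?Ds. (1/2::real) powr (real n / 3)) \<le> (\<Sum>X\<in>?Ds. (1/2::real)^card X)"
  proof (rule sum_mono)
    fix X assume "X \<in> ?Ds"
    then have "real (card X) \<le> real n / 3" by auto
    then have "(1/2::real) powr (real n / 3) \<le> (1/2) powr (real (card X))"
      by (intro powr_mono') auto
    then show "(1/2::real) powr (real n / 3) \<le> (1/2)^card X" by (simp add: powr_realpow)
  qed
  ultimately have "real (card ?Ds) * (1/2) powr (real n / 3) \<le> (3/2)^n" using tot by simp
  moreover have "(1/2::real) powr (real n / 3) * 2 powr (real n / 3) = 1"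
    by (simp add: powr_mult[symmetric])
  ultimately have "real (card ?Ds) * (1/2) powr (real n / 3) * 2 powr (real n / 3) \<le> (3/2)^n * 2 powr (real n / 3)"
    by (intro mult_right_mono) auto
  then show ?thesis using \<open>(1/2::real) powr (real n / 3) * 2 powr (real n / 3) = 1\<close>
    by (simp add: mult.assoc)
qed

lemma all_card:
  "real (card {A. A \<subseteq> {..<(n::nat)} \<and> card A = n div 2}) \<ge> 2^n / (real n + 1)"
proof -
  have c: "card {A. A \<subseteq> {..<(n::nat)} \<and> card A = n div 2} = n choose (n div 2)"
    using n_subsets[of "{..<n}" "n div 2"] by simp
  have "(2::nat)^n = (\<Sum>j\<le>n. n choose j)" by (simp add: choose_row_sum)
  also have "\<dots> \<le> (\<Sum>j\<le>n. n choose (n div 2))" by (intro sum_mono binomial_maximum)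
  also have "\<dots> = (n+1) * (n choose (n div 2))" by simp
  finally have "real (2^n) \<le> real ((n+1) * (n choose (n div 2)))" by linarith
  then have "2^n \<le> (real n + 1) * real (n choose (n div 2))" by (simp add: algebra_simps)
  then show ?thesis using c by (simp add: field_simps)
qed



lemma good_tree:
  assumes k: "k \<ge> 1" and A: "A \<subseteq> {..<2^k}" "card A = 2^k div 2"
    and T: "is_tester (2^k) (P_A k A) (1/3) T"
  shows "\<exists>t\<in>set_pmf T. 3 * card ((A - {y. y < 2^k \<and> eval_tree t (hadamard k y)})
            \<union> ({y. y < 2^k \<and> eval_tree t (hadamard k y)} - A)) \<le> 2^k"
proof -
  define n :: nat where "n = 2^k"
  have n2: "2 * (n div 2) = n" unfolding n_def using k
    by (cases k) auto
  have npos: "n > 0" unfolding n_def by simp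
  define B where "B = {..<n} - A"
  have An: "A \<subseteq> {..<n}" using A n_def by simp
  have cA: "card A = n div 2" using A n_def by simp
  have cB: "card B = n div 2" unfolding B_def using An cA n2
    by (metis card_Diff_subset card_lessThan finite_subset finite_lessThan add_diff_cancel_right' mult_2)
  define sel where "sel t = {y. y < n \<and> eval_tree t (hadamard k y)}" for t
  define R where "R = map_pmf sel T"
  define V where "V = set_pmf R"
  have VU: "V \<subseteq> Pow {..<n}" unfolding V_def R_def sel_def by auto
  have finV: "finite V" using VU by (meson finite_Pow_iff finite_lessThan finite_subset)
  have sum1: "(\<Sum>S\<in>V. pmf R S) = 1" using sum_pmf_eq_1[OF finV] V_def by simp
  define acc where "acc y = accept_prob T (hadamard k y)" for y
  have acc_eq: "acc y = (\<Sum>S\<in>V. pmf R S * of_bool (y \<in> S))" if "y < n" for y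
  proof -
    have "acc y = measure_pmf.prob R {S. y \<in> S}"
      unfolding acc_def accept_prob_def R_def measure_map_pmf
      by (rule arg_cong[where f="measure_pmf.prob T"]) (auto simp: sel_def that)
    also have "\<dots> = measure_pmf.prob R ({S. y \<in> S} \<inter> V)"
      unfolding V_def by (rule measure_Int_set_pmf[symmetric])
    also have "\<dots> = (\<Sum>S\<in>{S\<in>V. y \<in> S}. pmf R S)"
    proof -
      have "{S. y \<in> S} \<inter> V = {S\<in>V. y \<in> S}" by auto
      moreover have "measure_pmf.prob R {S\<in>V. y \<in> S} = sum (pmf R) {S\<in>V. y \<in> S}"
        by (rule measure_measure_pmf_finite) (use finV in simp)
      ultimately show ?thesis by simp
    qed
    also have "\<dots> = (\<Sum>S\<in>V. pmf R S * of_bool (y \<in> S))"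
      unfolding sum.inter_filter[OF finV] by (intro sum.cong) auto
    finally show ?thesis .
  qed
  have lenh: "length (hadamard k y) = n" for y unfolding hadamard_def n_def by simp
  have accA: "acc y \<ge> 2/3" if "y \<in> A" for y
    using T that unfolding is_tester_def acc_def P_A_def n_def by auto
  have accB: "acc y \<le> 1/3" if "y \<in> B" for y
  proof -
    have far: "far n (P_A k A) (1/3) (hadamard k y)"
      unfolding far_def P_A_def
    proof clarify
      fix y' assume "y' \<in> A"
      then have "y' < 2^k" "y' \<noteq> y" using An that B_def n_def by auto
      moreover have "y < 2^k" using that B_def n_def by auto
      ultimately have "2 * hdist (hadamard k y) (hadamard k y') = n"
        using hadamard_dist n_def by metis
      then show "1/3 * real n < real (hdist (hadamard k y) (hadamard k y'))"
        using npos by linarith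
    qed
    then show ?thesis using T lenh unfolding is_tester_def acc_def n_def by auto
  qed
  define g where "g S = real (card (A \<inter> S)) - real (card (B \<inter> S))" for S
  have cardsum: "real (card (X \<inter> S)) = (\<Sum>y\<in>X. of_bool (y \<in> S))" if "finite X" for X S
  proof -
    have "X \<inter> S = {y\<in>X. y \<in> S}" by auto
    then show ?thesis using that by (simp add: sum.inter_filter[symmetric] )
  qed
  have finA: "finite A" and finB: "finite B" using An B_def finite_subset by auto
  have "(\<Sum>y\<in>A. acc y) - (\<Sum>y\<in>B. acc y) = (\<Sum>S\<in>V. pmf R S * g S)"
  proof -
    have "(\<Sum>y\<in>A. acc y) = (\<Sum>y\<in>A. \<Sum>S\<in>V. pmf R S * of_bool (y \<in> S))"
      using acc_eq An by (intro sum.cong) auto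
    also have "\<dots> = (\<Sum>S\<in>V. pmf R S * real (card (A \<inter> S)))"
      by (subst sum.swap) (simp add: cardsum[OF finA] sum_distrib_left)
    finally have 1: "(\<Sum>y\<in>A. acc y) = (\<Sum>S\<in>V. pmf R S * real (card (A \<inter> S)))" .
    have "(\<Sum>y\<in>B. acc y) = (\<Sum>y\<in>B. \<Sum>S\<in>V. pmf R S * of_bool (y \<in> S))"
      using acc_eq B_def by (intro sum.cong) auto
    also have "\<dots> = (\<Sum>S\<in>V. pmf R S * real (card (B \<inter> S)))"
      by (subst sum.swap) (simp add: cardsum[OF finB] sum_distrib_left)
    finally have 2: "(\<Sum>y\<in>B. acc y) = (\<Sum>S\<in>V. pmf R S * real (card (B \<inter> S)))" .
    show ?thesis unfolding 1 2 g_def by (simp add: sum_subtractf right_diff_distrib)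
  qed
  moreover have "(\<Sum>y\<in>A. acc y) \<ge> (\<Sum>y\<in>A. 2/3)" using accA by (intro sum_mono) auto
  moreover have "(\<Sum>y\<in>B. acc y) \<le> (\<Sum>y\<in>B. 1/3)" using accB by (intro sum_mono) auto
  ultimately have big: "(\<Sum>S\<in>V. pmf R S * g S) \<ge> real n / 6"
    using cA cB n2 by (simp; linarith?)
  have "\<exists>S\<in>V. 6 * g S \<ge> real n"
  proof (rule ccontr)
    assume "\<not> ?thesis"
    then have lt: "\<forall>S\<in>V. 6 * g S \<le> real n - 1"
    proof (intro ballI)
      fix S assume "S \<in> V" "\<not> (\<exists>S\<in>V. real n \<le> 6 * g S)"
      then have "6 * g S < real n" by auto
      then have "real (6 * card (A \<inter> S)) < real (n + 6 * card (B \<inter> S))" unfolding g_def by simp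
      then have "6 * card (A \<inter> S) < n + 6 * card (B \<inter> S)" by (simp only: of_nat_less_iff)
      then have "6 * card (A \<inter> S) + 1 \<le> n + 6 * card (B \<inter> S)" by simp
      then have "real (6 * card (A \<inter> S) + 1) \<le> real (n + 6 * card (B \<inter> S))" by (simp only: of_nat_le_iff)
      then show "6 * g S \<le> real n - 1" unfolding g_def by simp
    qed
    have "(\<Sum>S\<in>V. pmf R S * g S) \<le> (\<Sum>S\<in>V. pmf R S * ((real n - 1)/6))"
      using lt by (intro sum_mono mult_left_mono) (auto simp: pmf_nonneg)
    also have "\<dots> = (real n - 1)/6" using sum1 by (simp only: sum_distrib_right[symmetric])
    finally have "(\<Sum>S\<in>V. pmf R S * g S) \<le> (real n - 1) / 6" .
    then show False using big by (simp add: field_simps)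
  qed
  then obtain S where S: "S \<in> V" "6 * g S \<ge> real n" by blast
  then obtain t where t: "t \<in> set_pmf T" "S = sel t" unfolding V_def R_def by auto
  have SU: "S \<subseteq> {..<n}" using S VU by auto
  have "card ((A - S) \<union> (S - A)) = card (A - S) + card (S - A)"
    using finA SU by (intro card_Un_disjoint) (auto intro: finite_subset)
  moreover have "card (A - S) = card A - card (A \<inter> S)"
    using finA by (metis card_Diff_subset_Int finite_Int Diff_Int2 Int_absorb Diff_Int Int_commute card_Diff_subset Int_lower1)
  moreover have "S - A = B \<inter> S" using SU B_def by auto
  moreover have "card (A \<inter> S) \<le> card A" using finA by (simp add: card_mono)
  moreover have "n + 6 * card (B \<inter> S) \<le> 6 * card (A \<inter> S)"
  proof -
    have "real (n + 6 * card (B \<inter> S)) \<le> real (6 * card (A \<inter> S))"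
      using S(2) unfolding g_def by simp
    then show ?thesis by (simp only: of_nat_le_iff)
  qed
  ultimately have "3 * card ((A - S) \<union> (S - A)) \<le> n"
    using cA n2 by simp
  then show ?thesis using t unfolding sel_def n_def by auto
qed



lemma bound_lim: "(\<lambda>k::nat. (2^k+3) powr (2 * 2 powr (real k/4)) * ((27/32) powr (2^k/3)) * (2^k+1::real)) \<longlonglongrightarrow> 0"
  by real_asymp

lemma powr_ident: "(3/2::real)^n * 2 powr (real n / 3) / 2^n = (27/32) powr (real n / 3)"
proof -
  have "(3/2::real)^n / 2^n = (3/4)^n" by (subst power_divide[symmetric]) simp
  also have "\<dots> = (3/4) powr (real n)" by (simp add: powr_realpow)
  also have "\<dots> = ((3/4) powr 3) powr (real n / 3)"
  proof -
    have "((3/4::real) powr 3) powr (real n / 3) = (3/4) powr (3 * (real n/3))" by (rule powr_powr)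
    then show ?thesis by simp
  qed
  also have "(3/4::real) powr 3 = 27/64" by (simp add: powr_realpow[of _ 3, simplified] power3_eq_cube)
  finally have "(3/2::real)^n / 2^n = (27/64) powr (real n / 3)" .
  then have "(3/2::real)^n * 2 powr (real n / 3) / 2^n = (27/64) powr (real n / 3) * 2 powr (real n / 3)"
    by (simp add: field_simps)
  also have "\<dots> = (27/32) powr (real n / 3)" by (simp add: powr_mult[symmetric])
  finally show ?thesis .
qed

lemma main_bound:
  assumes k: "k \<ge> 1"
  shows "real (card {A. A \<subseteq> {..<2^k} \<and> card A = 2^k div 2 \<and>
        (\<exists>T q. is_tester (2^k) (P_A k A) (1/3) T \<and> makes_at_most T q \<and> real q < 1/4 * real k)})
     / real (card {A. A \<subseteq> {..<(2::nat)^k} \<and> card A = 2^k div 2})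
     \<le> (2^k+3) powr (2 * 2 powr (real k/4)) * ((27/32) powr (2^k/3)) * (2^k+1::real)"
proof -
  define n :: nat where "n = 2^k"
  define Q where "Q = k div 4"
  define sel where "sel t = {y. y < n \<and> eval_tree t (hadamard k y)}" for t
  define Ds where "Ds = {D. D \<subseteq> {..<n} \<and> 3 * card D \<le> n}"
  define G where "G = {A. A \<subseteq> {..<2^k} \<and> card A = 2^k div 2 \<and>
        (\<exists>T q. is_tester (2^k) (P_A k A) (1/3) T \<and> makes_at_most T q \<and> real q < 1/4 * real k)}"
  define AL where "AL = {A. A \<subseteq> {..<(2::nat)^k} \<and> card A = 2^k div 2}"
  have lenh: "length (hadamard k y) = n" for y unfolding hadamard_def n_def by simp
  have sub: "G \<subseteq> (\<lambda>(t,D). (sel t - D) \<union> (D - sel t)) ` (dtrees n Q \<times> Ds)"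
  proof
    fix A assume "A \<in> G"
    then obtain T q where A: "A \<subseteq> {..<n}" "card A = 2^k div 2"
      and T: "is_tester (2^k) (P_A k A) (1/3) T" "makes_at_most T q" "real q < 1/4 * real k"
      unfolding G_def n_def by auto
    have qQ: "q \<le> Q" using T(3) unfolding Q_def by linarith
    obtain t where t: "t \<in> set_pmf T" "3 * card ((A - sel t) \<union> (sel t - A)) \<le> n"
      using good_tree[OF k A(1)[unfolded n_def] A(2) T(1)] unfolding sel_def n_def by blast
    have "depth t \<le> Q" using t(1) T(2) qQ unfolding makes_at_most_def by fastforce
    then have t': "normt n t \<in> dtrees n Q" by (rule normt_in)
    have st: "sel (normt n t) = sel t" unfolding sel_def using eval_normt[OF lenh] by simp
    define D where "D = (A - sel t) \<union> (sel t - A)"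
    have "D \<in> Ds" unfolding Ds_def D_def using t(2) A(1) by (auto simp: sel_def)
    moreover have "A = (sel (normt n t) - D) \<union> (D - sel (normt n t))" unfolding st D_def by auto
    ultimately show "A \<in> (\<lambda>(t,D). (sel t - D) \<union> (D - sel t)) ` (dtrees n Q \<times> Ds)"
      using t' by (auto simp: image_iff)
  qed
  have finDs: "finite Ds" unfolding Ds_def by (rule finite_subset[of _ "Pow {..<n}"]) auto
  have finT: "finite (dtrees n Q)" using trees_card by blast
  have "card G \<le> card ((\<lambda>(t,D). (sel t - D) \<union> (D - sel t)) ` (dtrees n Q \<times> Ds))"
    using sub finDs finT by (intro card_mono) auto
  also have "\<dots> \<le> card (dtrees n Q \<times> Ds)" by (rule card_image_le) (use finDs finT in auto)
  also have "\<dots> = card (dtrees n Q) * card Ds" by (rule card_cartesian_product)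
  finally have "card G \<le> card (dtrees n Q) * card Ds" .
  then have cG: "real (card G) \<le> real (card (dtrees n Q)) * real (card Ds)"
    by (simp only: of_nat_mult[symmetric] of_nat_le_iff)
  have cT: "real (card (dtrees n Q)) \<le> (real n + 3) powr (2 * 2 powr (real k/4))"
  proof -
    have "(n+3) * card (dtrees n Q) \<le> (n+3) ^ (2^(Q+1))" using trees_card by blast
    then have "card (dtrees n Q) \<le> (n+3) ^ (2^(Q+1))"
      by (rule le_trans[rotated]) simp
    then have "real (card (dtrees n Q)) \<le> (real n + 3) ^ (2^(Q+1))"
      by (simp only: of_nat_le_iff[symmetric, where 'a=real]) simp
    also have "\<dots> = (real n + 3) powr (real (2^(Q+1)))" by (subst powr_realpow) auto
    also have "\<dots> \<le> (real n + 3) powr (2 * 2 powr (real k/4))"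
    proof (rule powr_mono)
      have "real Q \<le> real k / 4" unfolding Q_def by linarith
      then have "2 powr real Q \<le> 2 powr (real k / 4)" by simp
      then show "real (2^(Q+1)) \<le> 2 * 2 powr (real k/4)"
        by (simp add: powr_realpow[symmetric])
    qed simp
    finally show ?thesis .
  qed
  have cD: "real (card Ds) \<le> (3/2)^n * 2 powr (real n / 3)" unfolding Ds_def by (rule Ds_card)
  have cAL: "real (card AL) \<ge> 2^n / (real n + 1)" unfolding AL_def using all_card[of n] unfolding n_def .
  have pos: "(0::real) < 2^n / (real n + 1)" by simp
  have "real (card G) / real (card AL) \<le> real (card G) / (2^n / (real n + 1))"
  proof (rule divide_left_mono)
    show "2^n / (real n + 1) \<le> real (card AL)" by (rule cAL)
    show "0 \<le> real (card G)" by simp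
    have "0 < real (card AL)" using cAL pos by linarith
    then show "0 < real (card AL) * (2^n / (real n + 1))" using pos by simp
  qed
  also have "\<dots> \<le> ((real n + 3) powr (2 * 2 powr (real k/4)) * ((3/2)^n * 2 powr (real n / 3))) / (2^n / (real n + 1))"
    using cG cT cD pos by (intro divide_right_mono order.trans[OF cG] mult_mono) auto
  also have "\<dots> = (real n + 3) powr (2 * 2 powr (real k/4)) * ((3/2)^n * 2 powr (real n / 3) / 2^n) * (real n + 1)"
    by (simp add: field_simps)
  also have "\<dots> = (real n + 3) powr (2 * 2 powr (real k/4)) * ((27/32) powr (real n / 3)) * (real n + 1)"
    by (simp only: powr_ident)
  finally show ?thesis unfolding G_def AL_def n_def by simp
qed

theorem lemma3p3:
  shows "\<exists>c>0. (\<lambda>k::nat.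
     real (card {A. A \<subseteq> {..<2^k} \<and> card A = 2^k div 2 \<and>
        (\<exists>T q. is_tester (2^k) (P_A k A) (1/3) T \<and> makes_at_most T q \<and> real q < c * real k)})
     / real (card {A. A \<subseteq> {..<(2::nat)^k} \<and> card A = 2^k div 2}))
     \<longlonglongrightarrow> 0"
proof (intro exI[of _ "1/4"] conjI)
  show "(1/4::real) > 0" by simp
  show "(\<lambda>k::nat.
     real (card {A. A \<subseteq> {..<2^k} \<and> card A = 2^k div 2 \<and>
        (\<exists>T q. is_tester (2^k) (P_A k A) (1/3) T \<and> makes_at_most T q \<and> real q < 1/4 * real k)})
     / real (card {A. A \<subseteq> {..<(2::nat)^k} \<and> card A = 2^k div 2}))
     \<longlonglongrightarrow> 0"
  proof (rule tendsto_sandwich[OF _ _ tendsto_const bound_lim])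
    show "eventually (\<lambda>k. 0 \<le> real (card {A. A \<subseteq> {..<2^k} \<and> card A = 2^k div 2 \<and>
        (\<exists>T q. is_tester (2^k) (P_A k A) (1/3) T \<and> makes_at_most T q \<and> real q < 1/4 * real k)})
     / real (card {A. A \<subseteq> {..<(2::nat)^k} \<and> card A = 2^k div 2})) sequentially"
      by simp
    show "eventually (\<lambda>k. real (card {A. A \<subseteq> {..<2^k} \<and> card A = 2^k div 2 \<and>
        (\<exists>T q. is_tester (2^k) (P_A k A) (1/3) T \<and> makes_at_most T q \<and> real q < 1/4 * real k)})
     / real (card {A. A \<subseteq> {..<(2::nat)^k} \<and> card A = 2^k div 2})
     \<le> (2^k+3) powr (2 * 2 powr (real k/4)) * ((27/32) powr (2^k/3)) * (2^k+1::real)) sequentially"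
      using eventually_ge_at_top[of 1] by eventually_elim (rule main_bound)
  qed
qed

end
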